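(* For every positive integer $r$ there is a ReLU network with two input units, all of whose weights lie in $\{\frac12,-\frac12\}$, implementing a function $\times':\mathbb{R}^2\to\mathbb{R}$ such that: (i) $\times'(x,y)=0$ whenever $x=0$ or $y=0$; (ii) $|\times'(x,y)-xy|\le 6\cdot 2^{-2(r+1)}$ for all $x,y\in[-1,1]$; (iii) the depth is $\mathcal{O}(r)$; (iv) the width is bounded by a constant independent of $r$; (v) the number of weights is $\mathcal{O}(r)$.
   Context: A ReLU network is a feedforward network with activation $\sigma(x)=\max(0,x)$ in which each unit connects only to units in the next layer; depth is the number of layers and width the maximum number of units in a layer. *)

theory Defs
  imports Main "HOL.Real"
begin

definition relu :: "real \<Rightarrow> real" where
  "relu x = max 0 x"

text \<open>A unit (neuron) is given by its list of incoming weights (one per unit of the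
  previous layer; weight 0 means: no connection) and its bias (0 means: no bias).
  A layer is a list of units; a network is the list of its non-input layers
  (hidden layers followed by the output layer).\<close>
type_synonym neuron = "real list \<times> real"
type_synonym layer = "neuron list"
type_synonym network = "layer list"

definition eval_neuron :: "neuron \<Rightarrow> real list \<Rightarrow> real" where
  "eval_neuron u xs = sum_list (map2 (*) (fst u) xs) + snd u"

fun eval_net :: "network \<Rightarrow> real list \<Rightarrow> real list" where
  "eval_net [] xs = xs"
| "eval_net [L] xs = map (\<lambda>u. eval_neuron u xs) L"
| "eval_net (L # Ls) xs = eval_net Ls (map (\<lambda>u. relu (eval_neuron u xs)) L)"

fun wf_layers :: "nat \<Rightarrow> network \<Rightarrow> bool" where
  "wf_layers n [] = False"
| "wf_layers n [L] = (length L = 1 \<and> (\<forall>u\<in>set L. length (fst u) = n))"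
| "wf_layers n (L # Ls) = (L \<noteq> [] \<and> (\<forall>u\<in>set L. length (fst u) = n) \<and> wf_layers (length L) Ls)"

definition relu_net2 :: "network \<Rightarrow> bool" where
  "relu_net2 N = wf_layers 2 N"

definition net_fun :: "network \<Rightarrow> real \<Rightarrow> real \<Rightarrow> real" where
  "net_fun N x y = hd (eval_net N [x, y])"

definition half_weights :: "network \<Rightarrow> bool" where
  "half_weights N = (\<forall>L\<in>set N. \<forall>u\<in>set L.
      (\<forall>w\<in>set (fst u). w \<in> {0, 1/2, -1/2}) \<and> snd u \<in> {0, 1/2, -1/2})"

text \<open>Depth = number of layers (including the input layer).\<close>
definition depth :: "network \<Rightarrow> nat" where
  "depth N = length N + 1"

text \<open>Width = maximal number of units in a layer (including the input layer of size 2).\<close>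
definition width :: "network \<Rightarrow> nat" where
  "width N = Max (insert 2 (set (map length N)))"

definition num_weights :: "network \<Rightarrow> nat" where
  "num_weights N = (\<Sum>L\<leftarrow>N. \<Sum>u\<leftarrow>L.
      length (filter (\<lambda>w. w \<noteq> 0) (fst u)) + (if snd u \<noteq> 0 then 1 else 0))"

end

theory Submission
  imports Defs
begin


definition g :: "real \<Rightarrow> real" where "g t = 2*t - 4*relu(t - 1/2)"

fun F :: "nat \<Rightarrow> real \<Rightarrow> real" where
  "F 0 t = t"
| "F (Suc k) t = t - g t / 2 + F k (g t) / 4"

lemma relu_pos[simp]: "0 \<le> x \<Longrightarrow> relu x = x" by (simp add: relu_def)
lemma relu_nonneg[simp]: "0 \<le> relu x" by (simp add: relu_def)

lemma g_range: "0 \<le> t \<Longrightarrow> t \<le> 1 \<Longrightarrow> 0 \<le> g t \<and> g t \<le> 1"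
  by (cases "t \<le> 1/2") (auto simp: g_def relu_def)

lemma gk_range: "0 \<le> t \<Longrightarrow> t \<le> 1 \<Longrightarrow> 0 \<le> (g^^k) t \<and> (g^^k) t \<le> 1"
  by (induction k) (auto simp: g_range)

lemma g_sq: "0 \<le> t \<Longrightarrow> t \<le> 1 \<Longrightarrow> t - g t/2 + (g t)^2/4 = t^2"
  by (cases "t \<le> 1/2") (auto simp: g_def relu_def power2_eq_square field_simps)

lemma F_err: "0 \<le> t \<Longrightarrow> t \<le> 1 \<Longrightarrow> 0 \<le> F k t - t^2 \<and> F k t - t^2 \<le> 1/4^(k+1)"
proof (induction k arbitrary: t)
  case 0
  have a: "t - t^2 = t*(1-t)" by (simp add: power2_eq_square algebra_simps)
  have a2: "0 \<le> t*(1-t)" using 0 by simp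
  have b: "1/4 - (t - t^2) = (t-1/2)^2" by (simp add: power2_eq_square algebra_simps)
  have b2: "0 \<le> (t-1/2)^2" by simp
  have "0 \<le> t - t^2" "t - t^2 \<le> 1/4" using a a2 b b2 by linarith+
  then show ?case by simp
next
  case (Suc k)
  have r: "0 \<le> g t" "g t \<le> 1" using g_range Suc.prems by auto
  have e: "F (Suc k) t - t^2 = (F k (g t) - (g t)^2)/4"
    using g_sq[OF Suc.prems] by simp
  define X where "X = F k (g t) - (g t)^2"
  define c :: real where "c = 1/4^(k+1)"
  have X: "0 \<le> X" "X \<le> c" using Suc.IH[OF r] unfolding X_def c_def by auto
  have c: "1/4^(Suc k + 1) = c/4" unfolding c_def by simp
  show ?case unfolding e c X_def[symmetric] using X by simp
qed

lemma F_fwd: "F (Suc k) t = F k t - (g^^(Suc k)) t / 4^(Suc k)"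
proof (induction k arbitrary: t)
  case 0 then show ?case by simp
next
  case (Suc k)
  have "F (Suc (Suc k)) t = t - g t / 2 + F (Suc k) (g t) / 4" by simp
  also have "\<dots> = t - g t / 2 + (F k (g t) - (g^^(Suc k)) (g t) / 4^(Suc k)) / 4" using Suc by simp
  also have "(g^^(Suc k)) (g t) = (g^^(Suc (Suc k))) t" by (simp only: funpow_Suc_right comp_def)
  finally show ?case by (simp add: field_simps)
qed

definition st :: "real \<times> real \<Rightarrow> real \<times> real" where
  "st p = (relu(2*relu(fst p) - 4*relu(fst p - 1/2)),
           relu(relu(4*snd p) - 2*relu(fst p) + 4*relu(fst p - 1/2)))"

lemma aux_cancel: "(c::real) \<noteq> 0 \<Longrightarrow> c * (a - b/c) = c*a - b"
  by (simp add: right_diff_distrib)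

lemma st_alt: "0 \<le> u \<Longrightarrow> st (u,K) = (relu (g u), relu (relu (4*K) - g u))"
  unfolding st_def g_def by (simp add: algebra_simps)

lemma st_iter: "0 \<le> t \<Longrightarrow> t \<le> 1 \<Longrightarrow> (st^^k) (t,t) = ((g^^k) t, 4^k * F k t)"
proof (induction k)
  case 0 then show ?case by simp
next
  case (Suc k)
  let ?u = "(g^^k) t"
  have u: "0 \<le> ?u" "?u \<le> 1" using gk_range Suc.prems by auto
  have Fp: "0 \<le> F k t" using F_err[OF Suc.prems, of k] by (smt (verit) zero_le_power2)
  have Fp2: "0 \<le> F (Suc k) t" using F_err[OF Suc.prems, of "Suc k"] by (smt (verit) zero_le_power2)
  have P: "relu (4^Suc k * F (Suc k) t) = 4^Suc k * F (Suc k) t"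
    by (rule relu_pos, rule mult_nonneg_nonneg[OF _ Fp2]) simp
  have gu: "g ?u = (g^^Suc k) t" by simp
  have "(st^^Suc k) (t,t) = st (?u, 4^k * F k t)" using Suc by simp
  also have "\<dots> = (g ?u, relu (4^(Suc k) * F k t - g ?u))"
    using u Fp g_range[OF u] by (simp add: st_alt mult.assoc)
  also have "4^(Suc k) * F k t - g ?u = 4^(Suc k) * F (Suc k) t"
  proof -
    have "4^(Suc k) * F (Suc k) t = 4^(Suc k) * (F k t - (g^^(Suc k)) t / 4^(Suc k))"
      by (simp only: F_fwd)
    also have "\<dots> = 4^(Suc k) * F k t - (g^^(Suc k)) t"
      by (rule aux_cancel) simp
    finally show ?thesis unfolding gu by (rule sym)
  qed
  finally show ?case unfolding P gu .
qed



fun hid :: "network \<Rightarrow> real list \<Rightarrow> real list" where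
  "hid [] xs = xs"
| "hid (L # Ls) xs = hid Ls (map (\<lambda>u. relu (eval_neuron u xs)) L)"

lemma hid_append: "hid (A @ B) xs = hid B (hid A xs)"
  by (induction A arbitrary: xs) auto

lemma eval_snoc: "eval_net (H @ [Ou]) xs = map (\<lambda>u. eval_neuron u (hid H xs)) Ou"
proof (induction H arbitrary: xs)
  case Nil then show ?case by simp
next
  case (Cons L H)
  then show ?case by (cases "H @ [Ou]") auto
qed

lemma s_rep: "sum_list (map2 (*) (replicate n a @ ws) (replicate n v @ xs)) = of_nat n * (a*v) + sum_list (map2 (*) ws xs)"
  by (induction n) (auto simp: algebra_simps)

lemma s_rep0: "sum_list (map2 (*) (replicate n a) (replicate n (v::real))) = of_nat n * (a*v)"
  using s_rep[of n a "[]" v "[]"] by simp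

definition VV :: "real \<Rightarrow> real \<Rightarrow> real \<Rightarrow> real \<Rightarrow> real list" where
  "VV ta Ka tb Kb = replicate 2 ta @ replicate 8 Ka @ replicate 2 tb @ replicate 8 Kb"

definition UU :: "real \<Rightarrow> real \<Rightarrow> real \<Rightarrow> real \<Rightarrow> real \<Rightarrow> real \<Rightarrow> real list" where
  "UU Ta Ba Ca Tb Bb Cb = replicate 4 Ta @ replicate 8 Ba @ replicate 2 Ca @ replicate 4 Tb @ replicate 8 Bb @ replicate 2 Cb"

definition WW :: "real \<Rightarrow> real \<Rightarrow> real \<Rightarrow> real \<Rightarrow> real list" where
  "WW p1 p2 q1 q2 = replicate 2 p1 @ replicate 2 p2 @ replicate 2 q1 @ replicate 2 q2"

abbreviation "hh \<equiv> (1/2::real)"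

definition layP :: layer where
  "layP = replicate 2 ([hh,hh],0) @ replicate 2 ([-hh,-hh],0) @ replicate 2 ([hh,-hh],0) @ replicate 2 ([-hh,hh],0)"

definition "qa = (replicate 2 hh @ replicate 2 hh @ replicate 2 0 @ replicate 2 (0::real), 0::real)"
definition "qb = (replicate 2 0 @ replicate 2 0 @ replicate 2 hh @ replicate 2 (hh::real), 0::real)"
definition layQ :: layer where
  "layQ = replicate 2 qa @ replicate 8 qa @ replicate 2 qb @ replicate 8 qb"

definition "nTa = (replicate 2 hh @ replicate 8 0 @ replicate 2 0 @ replicate 8 (0::real), 0::real)"
definition "nBa = (replicate 2 hh @ replicate 8 0 @ replicate 2 0 @ replicate 8 (0::real), -hh)"
definition "nKa = (replicate 2 0 @ replicate 8 hh @ replicate 2 0 @ replicate 8 (0::real), 0::real)"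
definition "nTb = (replicate 2 0 @ replicate 8 0 @ replicate 2 hh @ replicate 8 (0::real), 0::real)"
definition "nBb = (replicate 2 0 @ replicate 8 0 @ replicate 2 hh @ replicate 8 (0::real), -hh)"
definition "nKb = (replicate 2 0 @ replicate 8 0 @ replicate 2 0 @ replicate 8 (hh::real), 0::real)"
definition lay1 :: layer where
  "lay1 = replicate 4 nTa @ replicate 8 nBa @ replicate 2 nKa @ replicate 4 nTb @ replicate 8 nBb @ replicate 2 nKb"

definition "mta = (replicate 4 hh @ replicate 8 (-hh) @ replicate 2 0 @ replicate 4 0 @ replicate 8 0 @ replicate 2 (0::real), 0::real)"
definition "mKa = (replicate 4 (-hh) @ replicate 8 hh @ replicate 2 hh @ replicate 4 0 @ replicate 8 0 @ replicate 2 (0::real), 0::real)"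
definition "mtb = (replicate 4 0 @ replicate 8 0 @ replicate 2 0 @ replicate 4 hh @ replicate 8 (-hh) @ replicate 2 (0::real), 0::real)"
definition "mKb = (replicate 4 0 @ replicate 8 0 @ replicate 2 0 @ replicate 4 (-hh) @ replicate 8 hh @ replicate 2 (hh::real), 0::real)"
definition lay2 :: layer where
  "lay2 = replicate 2 mta @ replicate 8 mKa @ replicate 2 mtb @ replicate 8 mKb"

definition layHF :: layer where
  "layHF = [(replicate 2 0 @ replicate 8 hh @ replicate 2 0 @ replicate 8 0, 0),
            (replicate 2 0 @ replicate 8 0 @ replicate 2 0 @ replicate 8 hh, 0)]"

definition layH :: layer where "layH = [([hh,0],0), ([0,hh],0)]"
definition layO :: layer where "layO = [([hh,-hh],0)]"

lemma evP: "map (\<lambda>u. relu (eval_neuron u [x,y])) layP =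
   WW (relu (x/2+y/2)) (relu (-(x/2)-y/2)) (relu (x/2-y/2)) (relu (y/2-x/2))"
  by (simp add: layP_def WW_def eval_neuron_def algebra_simps)

lemma evQ: "map (\<lambda>u. relu (eval_neuron u (WW p1 p2 q1 q2))) layQ =
   VV (relu (p1+p2)) (relu (p1+p2)) (relu (q1+q2)) (relu (q1+q2))"
proof -
  have a: "eval_neuron qa (WW p1 p2 q1 q2) = p1+p2" by (simp add: qa_def WW_def eval_neuron_def s_rep s_rep0 sum_list_replicate)
  have b: "eval_neuron qb (WW p1 p2 q1 q2) = q1+q2" by (simp add: qb_def WW_def eval_neuron_def s_rep s_rep0 sum_list_replicate)
  show ?thesis by (simp add: layQ_def VV_def a b)
qed

lemma ev1: "map (\<lambda>u. relu (eval_neuron u (VV ta Ka tb Kb))) lay1 =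
   UU (relu ta) (relu (ta - 1/2)) (relu (4*Ka)) (relu tb) (relu (tb - 1/2)) (relu (4*Kb))"
proof -
  have "eval_neuron nTa (VV ta Ka tb Kb) = ta" "eval_neuron nBa (VV ta Ka tb Kb) = ta - 1/2"
       "eval_neuron nKa (VV ta Ka tb Kb) = 4*Ka" "eval_neuron nTb (VV ta Ka tb Kb) = tb"
       "eval_neuron nBb (VV ta Ka tb Kb) = tb - 1/2" "eval_neuron nKb (VV ta Ka tb Kb) = 4*Kb"
    by (simp_all add: nTa_def nBa_def nKa_def nTb_def nBb_def nKb_def VV_def eval_neuron_def s_rep s_rep0 sum_list_replicate)
  then show ?thesis by (simp add: lay1_def UU_def)
qed

lemma ev2: "map (\<lambda>u. relu (eval_neuron u (UU Ta Ba Ca Tb Bb Cb))) lay2 =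
   VV (relu (2*Ta - 4*Ba)) (relu (Ca - 2*Ta + 4*Ba)) (relu (2*Tb - 4*Bb)) (relu (Cb - 2*Tb + 4*Bb))"
proof -
  have "eval_neuron mta (UU Ta Ba Ca Tb Bb Cb) = 2*Ta - 4*Ba"
       "eval_neuron mKa (UU Ta Ba Ca Tb Bb Cb) = Ca - 2*Ta + 4*Ba"
       "eval_neuron mtb (UU Ta Ba Ca Tb Bb Cb) = 2*Tb - 4*Bb"
       "eval_neuron mKb (UU Ta Ba Ca Tb Bb Cb) = Cb - 2*Tb + 4*Bb"
    by (simp_all add: mta_def mKa_def mtb_def mKb_def UU_def eval_neuron_def s_rep s_rep0 sum_list_replicate)
  then show ?thesis by (simp add: lay2_def VV_def)
qed

lemma evHF: "map (\<lambda>u. relu (eval_neuron u (VV ta Ka tb Kb))) layHF = [relu (4*Ka), relu (4*Kb)]"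
  by (simp add: layHF_def VV_def eval_neuron_def s_rep s_rep0 sum_list_replicate)

lemma evH: "map (\<lambda>u. relu (eval_neuron u [a,b])) layH = [relu (a/2), relu (b/2)]"
  by (simp add: layH_def eval_neuron_def)

lemma evO: "map (\<lambda>u. eval_neuron u [a,b]) layO = [a/2 - b/2]"
  by (simp add: layO_def eval_neuron_def)



definition "VP a b = VV (fst a) (snd a) (fst b) (snd b)"

lemma stepL: "hid [lay1, lay2] (VP a b) = VP (st a) (st b)"
  by (simp add: VP_def ev1 ev2 st_def)

lemma iterL: "hid (concat (replicate k [lay1, lay2])) (VP a b) = VP ((st^^k) a) ((st^^k) b)"
proof (induction k arbitrary: a b)
  case 0 then show ?case by simp
next
  case (Suc k)
  have "concat (replicate (Suc k) [lay1, lay2]) = [lay1, lay2] @ concat (replicate k [lay1, lay2])" by simp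
  then show ?case by (simp only: hid_append stepL Suc funpow_Suc_right comp_def)
qed

definition hv :: "real \<Rightarrow> real" where "hv u = relu (u/2)"

lemma halfL: "hid (replicate k layH) [a, b] = [(hv^^k) a, (hv^^k) b]"
proof (induction k arbitrary: a b)
  case 0 then show ?case by simp
next
  case (Suc k)
  have "hid (replicate (Suc k) layH) [a,b] = hid (replicate k layH) [hv a, hv b]"
    by (simp add: evH hv_def)
  then show ?case by (simp only: Suc funpow_Suc_right comp_def)
qed

lemma hv_pow: "0 \<le> u \<Longrightarrow> (hv^^k) u = u / 2^k"
  by (induction k) (auto simp: hv_def)

definition HH :: "nat \<Rightarrow> network" where
  "HH m = [layP, layQ] @ concat (replicate m [lay1, lay2]) @ [layHF] @ replicate (2*m+1) layH"

definition NN :: "nat \<Rightarrow> network" where "NN m = HH m @ [layO]"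

definition Phi :: "nat \<Rightarrow> real \<Rightarrow> real" where
  "Phi m s = (hv^^(2*m+1)) (relu (4 * snd ((st^^m) (s,s))))"

lemma net_eq: "net_fun (NN m) x y =
   Phi m (relu (x/2+y/2) + relu (-(x/2)-y/2)) / 2 - Phi m (relu (x/2-y/2) + relu (y/2-x/2)) / 2"
proof -
  let ?s = "relu (x/2+y/2) + relu (-(x/2)-y/2)"
  let ?s' = "relu (x/2-y/2) + relu (y/2-x/2)"
  have e1: "hid [layP, layQ] [x,y] = VP (?s,?s) (?s',?s')"
    by (simp add: evP evQ VP_def)
  have e2: "hid [layHF] (VP ((st^^m) (?s,?s)) ((st^^m) (?s',?s'))) =
      [relu (4 * snd ((st^^m) (?s,?s))), relu (4 * snd ((st^^m) (?s',?s')))]"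
    by (simp add: VP_def evHF)
  have "hid (HH m) [x,y] = [Phi m ?s, Phi m ?s']"
    unfolding HH_def by (simp only: hid_append e1 iterL e2 halfL Phi_def)
  then show ?thesis unfolding net_fun_def NN_def eval_snoc by (simp add: evO)
qed



lemma nw_concat: "sum_list (map f (concat (replicate m xs))) = m * sum_list (map f (xs::layer list))"
  by (induction m) auto

lemma nw_val: "num_weights (NN m) = 116 + 372 * m"
  by (simp add: num_weights_def NN_def HH_def nw_concat layP_def layQ_def lay1_def lay2_def layHF_def layH_def layO_def
     qa_def qb_def nTa_def nBa_def nKa_def nTb_def nBb_def nKb_def mta_def mKa_def mtb_def mKb_def filter_replicate sum_list_replicate)

lemma "\<forall>L\<in>set (NN m). length L \<le> 28"
  by (auto simp add: NN_def HH_def layP_def layQ_def lay1_def lay2_def layHF_def layH_def layO_def)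

lemma width_le: "\<forall>L\<in>set N. length L \<le> 28 \<Longrightarrow> width N \<le> 28"
  by (auto simp: width_def)



fun wfh :: "nat \<Rightarrow> network \<Rightarrow> bool" where
  "wfh n [] = True"
| "wfh n (L # Ls) = (L \<noteq> [] \<and> (\<forall>u\<in>set L. length (fst u) = n) \<and> wfh (length L) Ls)"

fun odim :: "nat \<Rightarrow> network \<Rightarrow> nat" where
  "odim n [] = n"
| "odim n (L # Ls) = odim (length L) Ls"

lemma wf_snoc: "wfh n H \<Longrightarrow> length Ou = 1 \<Longrightarrow> \<forall>u\<in>set Ou. length (fst u) = odim n H \<Longrightarrow> wf_layers n (H @ [Ou])"
proof (induction H arbitrary: n)
  case Nil then show ?case by simp
next
  case (Cons L H) then show ?case by (cases "H @ [Ou]") auto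
qed

lemma wfh_append: "wfh n (A @ B) = (wfh n A \<and> wfh (odim n A) B)" "odim n (A @ B) = odim (odim n A) B"
  by (induction A arbitrary: n) auto

lemma wfh_concat: "wfh n S \<Longrightarrow> odim n S = n \<Longrightarrow> wfh n (concat (replicate k S)) \<and> odim n (concat (replicate k S)) = n"
  by (induction k) (auto simp: wfh_append)

lemma wfh_rep: "wfh n [L] \<Longrightarrow> odim n [L] = n \<Longrightarrow> wfh n (replicate k L) \<and> odim n (replicate k L) = n"
  using wfh_concat[of n "[L]" k] by simp

lemma wf_NN: "relu_net2 (NN m)"
proof -
  have a: "wfh 2 [layP, layQ]" "odim 2 [layP, layQ] = 20"
    by (simp_all add: layP_def layQ_def qa_def qb_def)
  have b: "wfh 20 [lay1, lay2]" "odim 20 [lay1, lay2] = 20"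
    by (simp_all add: lay1_def lay2_def nTa_def nBa_def nKa_def nTb_def nBb_def nKb_def mta_def mKa_def mtb_def mKb_def)
  have c: "wfh 20 [layHF]" "odim 20 [layHF] = 2"
    by (simp_all add: layHF_def)
  have d: "wfh 2 [layH]" "odim 2 [layH] = 2"
    by (simp_all add: layH_def)
  have "wfh 2 (HH m) \<and> odim 2 (HH m) = 2"
    unfolding HH_def using a wfh_concat[OF b, of m] c wfh_rep[OF d, of "2*m+1"]
    by (simp add: wfh_append)
  then show ?thesis unfolding relu_net2_def NN_def
    by (intro wf_snoc) (auto simp: layO_def)
qed

lemma hw_NN: "half_weights (NN m)"
  unfolding half_weights_def NN_def HH_def
  by (auto simp add: layP_def layQ_def lay1_def lay2_def layHF_def layH_def layO_def
     qa_def qb_def nTa_def nBa_def nKa_def nTb_def nBb_def nKb_def mta_def mKa_def mtb_def mKb_def)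

lemma length_concat_rep: "length (concat (replicate m xs)) = m * length xs"
  by (induction m) auto

lemma depth_NN: "depth (NN m) = 4*m + 6"
  by (simp add: depth_def NN_def HH_def length_concat_rep)

lemma width_NN: "width (NN m) \<le> 28"
  by (rule width_le)
     (auto simp add: NN_def HH_def layP_def layQ_def lay1_def lay2_def layHF_def layH_def layO_def)

lemma relu_abs: "relu a + relu (-a) = \<bar>a\<bar>"
  by (simp add: relu_def)

lemma Phi_eq: "0 \<le> s \<Longrightarrow> s \<le> 1 \<Longrightarrow> Phi m s / 2 = F m s"
proof -
  assume s: "0 \<le> s" "s \<le> 1"
  have Fp: "0 \<le> F m s" using F_err[OF s, of m] by (smt (verit) zero_le_power2)
  have nn: "0 \<le> 4 * (4^m * F m s)" using Fp by simp
  have p: "(2::real)^(2*m+1) * 2 = 4 * 4^m"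
    by (simp add: power_add power_mult)
  have "Phi m s = 4 * (4^m * F m s) / 2^(2*m+1)"
    unfolding Phi_def st_iter[OF s] snd_conv relu_pos[OF nn] hv_pow[OF nn] by (rule refl)
  then show ?thesis using p by (simp add: field_simps)
qed

lemma main_acc:
  assumes x: "x \<in> {-1..1}" and y: "y \<in> {-1..1}"
  shows "\<bar>net_fun (NN m) x y - x * y\<bar> \<le> 1 / 4^(m+1)"
proof -
  define s where "s = \<bar>x/2+y/2\<bar>"
  define s' where "s' = \<bar>x/2-y/2\<bar>"
  have e1: "relu (x/2+y/2) + relu (-(x/2)-y/2) = s"
    unfolding s_def using relu_abs[of "x/2+y/2"] by simp
  have e2: "relu (x/2-y/2) + relu (y/2-x/2) = s'"
    unfolding s'_def using relu_abs[of "x/2-y/2"] by simp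
  have sr: "0 \<le> s" "s \<le> 1" "0 \<le> s'" "s' \<le> 1" using x y unfolding s_def s'_def by auto
  have net: "net_fun (NN m) x y = F m s - F m s'"
    unfolding net_eq e1 e2 using Phi_eq sr by simp
  have xy: "x * y = s^2 - s'^2"
    unfolding s_def s'_def by (simp add: power2_eq_square algebra_simps)
  have a: "0 \<le> F m s - s^2" "F m s - s^2 \<le> 1/4^(m+1)" using F_err[OF sr(1,2)] by auto
  have b: "0 \<le> F m s' - s'^2" "F m s' - s'^2 \<le> 1/4^(m+1)" using F_err[OF sr(3,4)] by auto
  show ?thesis unfolding net xy using a b by linarith
qed

lemma zero_prop: "x = 0 \<or> y = 0 \<Longrightarrow> net_fun (NN m) x y = 0"
  unfolding net_eq by (auto simp: add.commute)

theorem proposition2: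
  shows "\<exists>Cd Cw Cn :: nat. \<forall>r::nat. r \<ge> 1 \<longrightarrow>
    (\<exists>N. relu_net2 N \<and> half_weights N \<and>
      (\<forall>x y. (x = 0 \<or> y = 0) \<longrightarrow> net_fun N x y = 0) \<and>
      (\<forall>x y. x \<in> {-1..1} \<longrightarrow> y \<in> {-1..1} \<longrightarrow>
          \<bar>net_fun N x y - x * y\<bar> \<le> 6 / 2 ^ (2 * (r + 1))) \<and>
      depth N \<le> Cd * r \<and> width N \<le> Cw \<and> num_weights N \<le> Cn * r)"
proof (intro exI allI impI)
  fix r :: nat
  assume r: "1 \<le> r"
  have p: "(2::real) ^ (2 * (r + 1)) = 4^(r+1)" by (simp add: power_mult)
  have q: "1 / (4::real)^(r+1) \<le> 6 / 2 ^ (2 * (r + 1))" unfolding p by (rule divide_right_mono) simp_all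
  show "relu_net2 (NN r) \<and> half_weights (NN r) \<and>
      (\<forall>x y. (x = 0 \<or> y = 0) \<longrightarrow> net_fun (NN r) x y = 0) \<and>
      (\<forall>x y. x \<in> {-1..1} \<longrightarrow> y \<in> {-1..1} \<longrightarrow>
          \<bar>net_fun (NN r) x y - x * y\<bar> \<le> 6 / 2 ^ (2 * (r + 1))) \<and>
      depth (NN r) \<le> 10 * r \<and> width (NN r) \<le> 28 \<and> num_weights (NN r) \<le> 500 * r"
  proof (intro conjI allI impI)
    show "relu_net2 (NN r)" by (rule wf_NN)
    show "half_weights (NN r)" by (rule hw_NN)
    show "width (NN r) \<le> 28" by (rule width_NN)
    show "depth (NN r) \<le> 10 * r" using r unfolding depth_NN by simp
    show "num_weights (NN r) \<le> 500 * r" using r unfolding nw_val by simp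
    fix x y :: real
    show "x = 0 \<or> y = 0 \<Longrightarrow> net_fun (NN r) x y = 0" by (rule zero_prop)
    show "x \<in> {-1..1} \<Longrightarrow> y \<in> {-1..1} \<Longrightarrow> \<bar>net_fun (NN r) x y - x * y\<bar> \<le> 6 / 2 ^ (2 * (r + 1))"
      using main_acc q by (rule order_trans)
  qed
qed

end
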